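(* Let $b_1^*\ge0$, $b_2^*\ge0$, $\sigma>0$, $\sigma_2^2=\sigma^2+(b_2^* )^2$, and for $b_1>0$ define $$b_1'(b_1)=\mathbb{E}_{\alpha\sim N(0,1),\,y\sim N(0,\sigma_2^2)}\Big[\tanh\Big(\frac{b_1\alpha}{\sigma^2}(y+\alpha b_1^* )\Big)(y+\alpha b_1^* )\,\alpha\Big]$$ with $\alpha,y$ independent. Then $b_1'$ is nondecreasing in $b_1$, and $$\lim_{b_1\to\infty}b_1'(b_1)=\frac2\pi\Big(b_1^*\tan^{-1}\Big(\frac{b_1^*}{\sigma_2}\Big)+\sigma_2\Big).$$
   Context: In the paper, $b_1'$ is the component of the population EM update $M(\beta)$ along $\beta/\|\beta\|$ when $b_1=\|\beta\|$, $b_1^*$ and $b_2^*$ are the components of $\beta^*$ along and orthogonal to $\beta$; the claim is stated directly in terms of the explicit expectation. *)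

theory Defs
  imports "HOL-Probability.Probability"
begin

text \<open>Joint law of independent alpha ~ N(0,1) and y ~ N(0, s2^2) (s2 = standard deviation).\<close>
definition em_joint :: "real \<Rightarrow> (real \<times> real) measure" where
  "em_joint s2 = density lborel std_normal_density \<Otimes>\<^sub>M density lborel (normal_density 0 s2)"

definition em_b1' :: "real \<Rightarrow> real \<Rightarrow> real \<Rightarrow> real \<Rightarrow> real" where
  "em_b1' \<sigma> b1s b2s b1 =
     (\<integral>(\<alpha>, y). tanh (b1 * \<alpha> / \<sigma>\<^sup>2 * (y + \<alpha> * b1s)) * (y + \<alpha> * b1s) * \<alpha>
        \<partial>em_joint (sqrt (\<sigma>\<^sup>2 + b2s\<^sup>2)))"

end

theory Submission
  imports Defs "HOL-Real_Asymp.Real_Asymp"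
begin



lemma L1:
  fixes c :: real assumes c: "c > 0"
  shows "(\<integral>\<^sup>+x. ennreal (\<bar>x\<bar>^3 * exp (- c * x\<^sup>2 / 2)) \<partial>lborel) = ennreal (4 / c\<^sup>2)"
proof -
  define r where "r = 1 / sqrt c"
  have r: "r > 0" "r\<^sup>2 = 1/c" using c by (auto simp: r_def power_divide)
  have "(\<integral>\<^sup>+x. ennreal (\<bar>x\<bar>^3 * exp (- c * x\<^sup>2 / 2)) \<partial>lborel)
      = \<bar>r\<bar> * (\<integral>\<^sup>+x. ennreal (\<bar>0 + r * x\<bar>^3 * exp (- c * (0 + r * x)\<^sup>2 / 2)) \<partial>lborel)"
    by (rule nn_integral_real_affine) (use r in auto)
  also have "\<dots> = (\<integral>\<^sup>+x. ennreal (r^4 * sqrt (2*pi)) * ennreal (std_normal_density x * \<bar>x\<bar>^(2*1+1)) \<partial>lborel)"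
  proof -
    have "\<bar>r\<bar> * (\<integral>\<^sup>+x. ennreal (\<bar>0 + r * x\<bar>^3 * exp (- c * (0 + r * x)\<^sup>2 / 2)) \<partial>lborel)
      = (\<integral>\<^sup>+x. ennreal r * ennreal (\<bar>0 + r * x\<bar>^3 * exp (- c * (0 + r * x)\<^sup>2 / 2)) \<partial>lborel)"
      using r by (simp add: nn_integral_cmult)
    also have "\<dots> = (\<integral>\<^sup>+x. ennreal (r^4 * sqrt (2*pi)) * ennreal (std_normal_density x * \<bar>x\<bar>^(2*1+1)) \<partial>lborel)"
    proof (rule nn_integral_cong)
      fix x :: real
      have e: "- c * (r * x)\<^sup>2 / 2 = - x\<^sup>2/2" using r c by (simp add: power_mult_distrib)
      have "r * (\<bar>r * x\<bar>^3 * exp (- c * (r * x)\<^sup>2 / 2)) = r^4 * sqrt (2*pi) * (std_normal_density x * \<bar>x\<bar>^(2*1+1))"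
      proof -
        have a: "\<bar>r * x\<bar>^3 = r^3 * \<bar>x\<bar>^3" using r by (simp add: abs_mult power_mult_distrib)
        have b: "sqrt (2*pi) * (1 / sqrt (2*pi)) = 1" by simp
        have t: "(2*1+1::nat) = 3" by simp
        have "r * (\<bar>r * x\<bar>^3 * exp (- c * (r * x)\<^sup>2 / 2)) = r^4 * (\<bar>x\<bar>^3 * exp (- x\<^sup>2/2))"
          unfolding a e by (simp add: power4_eq_xxxx power3_eq_cube)
        also have "\<dots> = r^4 * (sqrt (2*pi) * (1 / sqrt (2*pi))) * (\<bar>x\<bar>^3 * exp (- x\<^sup>2/2))"
          unfolding b by simp
        also have "\<dots> = r^4 * sqrt (2*pi) * (std_normal_density x * \<bar>x\<bar>^3)"
          unfolding std_normal_density_def by (simp only: mult_ac)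
        finally show ?thesis unfolding t .
      qed
      then show "ennreal r * ennreal (\<bar>0 + r * x\<bar>^3 * exp (- c * (0 + r * x)\<^sup>2 / 2)) =
        ennreal (r^4 * sqrt (2*pi)) * ennreal (std_normal_density x * \<bar>x\<bar>^(2*1+1))"
        using r by (simp add: ennreal_mult''[symmetric])
    qed
    finally show ?thesis .
  qed
  also have "\<dots> = ennreal (r^4 * sqrt (2*pi)) * (\<integral>\<^sup>+x. ennreal (std_normal_density x * \<bar>x\<bar>^(2*1+1)) \<partial>lborel)"
    by (simp add: nn_integral_cmult)
  also have "(\<integral>\<^sup>+x. ennreal (std_normal_density x * \<bar>x\<bar>^(2*1+1)) \<partial>lborel) = ennreal (sqrt (2/pi) * 2^1 * fact 1)"
  proof -
    have h: "has_bochner_integral lborel (\<lambda>x. std_normal_density x * \<bar>x\<bar>^(2*1+1)) (sqrt (2/pi) * 2^1 * fact 1)"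
      by (rule std_normal_moment_abs_odd)
    have i: "integrable lborel (\<lambda>x. std_normal_density x * \<bar>x\<bar>^(2*1+1))"
      using h by (simp add: has_bochner_integral_iff)
    have v: "integral\<^sup>L lborel (\<lambda>x. std_normal_density x * \<bar>x\<bar>^(2*1+1)) = sqrt (2/pi) * 2^1 * fact 1"
      using h has_bochner_integral_integral_eq by blast
    show ?thesis
      unfolding v[symmetric] by (rule nn_integral_eq_integral[OF i]) simp
  qed
  also have "ennreal (r^4 * sqrt (2*pi)) * ennreal (sqrt (2/pi) * 2^1 * fact 1) = ennreal (4 / c\<^sup>2)"
  proof -
    have r4: "r^4 = 1/c\<^sup>2"
    proof -
      have "r^4 = (r\<^sup>2)\<^sup>2" by simp
      also have "\<dots> = 1/c\<^sup>2" unfolding r(2) by (simp add: power_divide)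
      finally show ?thesis .
    qed
    have sq: "sqrt (2*pi) * sqrt (2/pi) = 2" by (simp add: real_sqrt_mult[symmetric])
    have e1: "r^4 * sqrt (2*pi) * (sqrt (2/pi) * 2^1 * fact 1) = r^4 * (sqrt (2*pi) * sqrt (2/pi)) * 2"
      by (simp add: mult_ac)
    have e2: "r^4 * sqrt (2*pi) * (sqrt (2/pi) * 2^1 * fact 1) = 4 / c\<^sup>2"
      unfolding e1 r4 using sq by simp
    have "ennreal (r^4 * sqrt (2*pi)) * ennreal (sqrt (2/pi) * 2^1 * fact 1)
       = ennreal (r^4 * sqrt (2*pi) * (sqrt (2/pi) * 2^1 * fact 1))"
      by (rule ennreal_mult''[symmetric]) simp
    then show ?thesis unfolding e2 .
  qed
  finally show ?thesis .
qed


lemma alg1: fixes Q s u :: real assumes q: "Q \<noteq> 0" shows "(0 * (2 * Q) -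
      - (s ^ 3) * (0 * Q + (0 + real 2 * (1 * u ^ (2 - Suc 0))) * 2)) /
     (2 * Q * (2 * Q)) =
     s ^ 3 * u / Q\<^sup>2"
  using q by (simp add: field_simps power2_eq_square)
lemma alg2: fixes Q s u :: real assumes q: "Q \<noteq> 0" "Q = s\<^sup>2 + u\<^sup>2" shows "((0 * u + 1 * s) * (2 * Q) -
      s * u * (0 * Q + (0 + real 2 * (1 * u ^ (2 - Suc 0))) * 2)) /
     (2 * Q * (2 * Q)) =
     s * (s\<^sup>2 - u\<^sup>2) / (2 * Q\<^sup>2)"
  using q(1) apply (simp add: field_simps power2_eq_square)
  apply (unfold q(2)) by algebra
lemma d1: fixes s u :: real assumes "s > 0" shows "((\<lambda>u. -(s^3)/(2*(s\<^sup>2+u\<^sup>2))) has_real_derivative s^3*u/(s\<^sup>2+u\<^sup>2)\<^sup>2) (at u)"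
proof -
  define Q where "Q = s\<^sup>2+u\<^sup>2"
  have p: "Q > 0" using assms by (simp add: add_pos_nonneg Q_def)
  have q: "Q \<noteq> 0" using p by simp
  show ?thesis
    apply (rule derivative_eq_intros refl)+
    apply (fold Q_def)
    using q apply simp by (rule alg1[OF q])
qed
lemma d2: fixes s u :: real assumes "s > 0" shows "((\<lambda>u. s*u/(2*(s\<^sup>2+u\<^sup>2))) has_real_derivative s*(s\<^sup>2-u\<^sup>2)/(2*(s\<^sup>2+u\<^sup>2)\<^sup>2)) (at u)"
proof -
  define Q where "Q = s\<^sup>2+u\<^sup>2"
  have p: "Q > 0" using assms by (simp add: add_pos_nonneg Q_def)
  have q: "Q \<noteq> 0" using p by simp
  show ?thesis
    apply (rule derivative_eq_intros refl)+
    apply (fold Q_def)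
    using q apply simp by (rule alg2[OF q Q_def])
qed
lemma d3: fixes s u :: real assumes "s > 0" shows "((\<lambda>u. arctan (u/s)/2) has_real_derivative s/(2*(s\<^sup>2+u\<^sup>2))) (at u)"
proof -
  define Q where "Q = s\<^sup>2+u\<^sup>2"
  have p: "Q > 0" using assms by (simp add: add_pos_nonneg Q_def)
  have e: "1 + (u/s)\<^sup>2 = Q / s\<^sup>2" using assms by (simp add: Q_def field_simps)
  have a: "DERIV (\<lambda>u. u/s) u :> 1/s" by (rule DERIV_cdivide[OF DERIV_ident])
  have b: "DERIV (\<lambda>u. arctan(u/s)) u :> inverse(1+(u/s)\<^sup>2) * (1/s)"
    by (rule DERIV_chain2[OF DERIV_arctan a])
  have c: "DERIV (\<lambda>u. arctan(u/s)/2) u :> inverse(1+(u/s)\<^sup>2)*(1/s)/2" by (rule DERIV_cdivide[OF b])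
  have "inverse(1+(u/s)\<^sup>2)*(1/s)/2 = s/(2*Q)"
    unfolding e using p assms by (simp add: field_simps power2_eq_square)
  with c show ?thesis unfolding Q_def by simp
qed

lemma alg: fixes Q s u b :: real assumes "Q > 0" "Q = s\<^sup>2+u\<^sup>2"
  shows "2/pi * (s^3 * u / Q\<^sup>2 + b*(s*(s\<^sup>2-u\<^sup>2)/(2*Q\<^sup>2) + s/(2*Q))) = (u + b) * (2 * s ^ 3 / (pi * Q\<^sup>2))"
  using assms(1) apply (simp add: field_simps)
  apply (unfold assms(2)) by algebra


lemma alg3: fixes Q s b A :: real assumes "Q > 0" "Q = s\<^sup>2+b\<^sup>2"
  shows "b/2 - 2/pi*(-(s^3)/(2*Q) + b*(s*(-b)/(2*Q) + (- A)/2)) = b/2 + (s + b * A) / pi"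
  using assms(1) apply (simp add: field_simps)
  apply (unfold assms(2)) by algebra

lemma HALF:
  fixes s b :: real assumes s: "s > 0"
  shows "(\<integral>\<^sup>+u. ennreal ((u + b) * (2 * s^3 / (pi * (s\<^sup>2 + u\<^sup>2)\<^sup>2))) * indicator {-b..} u \<partial>lborel)
     = ennreal (b/2 + (s + b * arctan (b/s)) / pi)"
proof -
  define F where "F u = 2/pi * (-(s^3)/(2*(s\<^sup>2+u\<^sup>2)) + b*(s*u/(2*(s\<^sup>2+u\<^sup>2)) + arctan(u/s)/2))" for u
  have pos: "s\<^sup>2 + u\<^sup>2 > 0" for u using s by (simp add: add_pos_nonneg)
  have D: "(F has_real_derivative ((u + b) * (2 * s^3 / (pi * (s\<^sup>2 + u\<^sup>2)\<^sup>2)))) (at u)" for u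
  proof -
    have "(F has_real_derivative
       2/pi * (s^3*u/(s\<^sup>2+u\<^sup>2)\<^sup>2 + b*(s*(s\<^sup>2-u\<^sup>2)/(2*(s\<^sup>2+u\<^sup>2)\<^sup>2) + s/(2*(s\<^sup>2+u\<^sup>2))))) (at u)"
      unfolding F_def
      by (intro DERIV_cmult DERIV_add d1 d2 d3 s)
    moreover have "2/pi * (s^3*u/(s\<^sup>2+u\<^sup>2)\<^sup>2 + b*(s*(s\<^sup>2-u\<^sup>2)/(2*(s\<^sup>2+u\<^sup>2)\<^sup>2) + s/(2*(s\<^sup>2+u\<^sup>2))))
       = (u + b) * (2 * s^3 / (pi * (s\<^sup>2 + u\<^sup>2)\<^sup>2))"
      by (rule alg[OF pos refl])
    ultimately show ?thesis by simp
  qed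
  have lim: "(F \<longlongrightarrow> b/2) at_top"
    unfolding F_def using s by real_asymp
  have "(\<integral>\<^sup>+u. ennreal ((u + b) * (2 * s^3 / (pi * (s\<^sup>2 + u\<^sup>2)\<^sup>2))) * indicator {-b..} u \<partial>lborel)
     = ennreal (b/2 - F (-b))"
    by (rule nn_integral_FTC_atLeast[OF _ D _ lim]) (use s in auto)
  also have "b/2 - F (-b) = b/2 + (s + b * arctan (b/s)) / pi"
  proof -
    have "F (-b) = 2/pi*(-(s^3)/(2*(s\<^sup>2+b\<^sup>2)) + b*(s*(-b)/(2*(s\<^sup>2+b\<^sup>2)) + (- arctan(b/s))/2))"
      unfolding F_def by (simp add: arctan_minus)
    then show ?thesis using alg3[OF pos[of b] refl, of "arctan (b/s)"] by simp
  qed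
  finally show ?thesis .
qed



lemma L2:
  fixes s b :: real assumes s: "s > 0" and b: "b \<ge> 0"
  shows "(\<integral>\<^sup>+u. ennreal (\<bar>u + b\<bar> * (2 * s^3 / (pi * (s\<^sup>2 + u\<^sup>2)\<^sup>2))) \<partial>lborel)
     = ennreal (2/pi * (s + b * arctan (b/s)))"
proof -
  define k where "k u = 2 * s^3 / (pi * (s\<^sup>2 + u\<^sup>2)\<^sup>2)" for u :: real
  have kneg: "k (-u) = k u" for u by (simp add: k_def)
  have [measurable]: "k \<in> borel_measurable borel" unfolding k_def by measurable
  have [measurable]: "{..-b} \<in> sets borel" "{-b..} \<in> sets borel" by auto
  have split: "ennreal (\<bar>u + b\<bar> * k u) = ennreal ((u + b) * k u) * indicator {-b..} u
       + ennreal (\<bar>u + b\<bar> * k u) * indicator {..-b} u" for u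
  proof (cases "u > -b")
    case True
    then have "\<bar>u+b\<bar> = u+b" "indicator {-b..} u = (1::ennreal)" "indicator {..-b} u = (0::ennreal)"
      by (auto simp: indicator_def)
    then show ?thesis by simp
  next
    case False
    show ?thesis
    proof (cases "u = -b")
      case True then show ?thesis by simp
    next
      case F2: False
      with False have "u < -b" by simp
      then have "indicator {-b..} u = (0::ennreal)" "indicator {..-b} u = (1::ennreal)"
        by (auto simp: indicator_def)
      then show ?thesis by simp
    qed
  qed
  have e0: "(\<integral>\<^sup>+u. ennreal (\<bar>u + b\<bar> * k u) \<partial>lborel)
     = (\<integral>\<^sup>+u. ennreal ((u + b) * k u) * indicator {-b..} u \<partial>lborel)
       + (\<integral>\<^sup>+u. ennreal (\<bar>u + b\<bar> * k u) * indicator {..-b} u \<partial>lborel)"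
  proof -
    have "(\<integral>\<^sup>+u. ennreal (\<bar>u + b\<bar> * k u) \<partial>lborel)
      = (\<integral>\<^sup>+u. ennreal ((u + b) * k u) * indicator {-b..} u
       + ennreal (\<bar>u + b\<bar> * k u) * indicator {..-b} u \<partial>lborel)"
      by (rule nn_integral_cong) (rule split)
    also have "\<dots> = (\<integral>\<^sup>+u. ennreal ((u + b) * k u) * indicator {-b..} u \<partial>lborel)
       + (\<integral>\<^sup>+u. ennreal (\<bar>u + b\<bar> * k u) * indicator {..-b} u \<partial>lborel)"
      by (rule nn_integral_add; measurable)
    finally show ?thesis .
  qed
  have e1: "(\<integral>\<^sup>+u. ennreal ((u + b) * k u) * indicator {-b..} u \<partial>lborel)
      = ennreal (b/2 + (s + b * arctan (b/s)) / pi)"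
    unfolding k_def by (rule HALF[OF s])
  have e2: "(\<integral>\<^sup>+u. ennreal (\<bar>u + b\<bar> * k u) * indicator {..-b} u \<partial>lborel)
      = ennreal \<bar>-1::real\<bar> * (\<integral>\<^sup>+v. ennreal (\<bar>(0 + -1 * v) + b\<bar> * k (0 + -1 * v)) * indicator {..-b} (0 + -1 * v) \<partial>lborel)"
  proof (rule nn_integral_real_affine[where f="\<lambda>u. ennreal (\<bar>u + b\<bar> * k u) * indicator {..-b} u" and c="-1" and t=0])
    show "(\<lambda>u. ennreal (\<bar>u + b\<bar> * k u) * indicator {..-b} u) \<in> borel_measurable borel" by measurable
  qed simp
  have e3: "ennreal \<bar>-1::real\<bar> * (\<integral>\<^sup>+v. ennreal (\<bar>(0 + -1 * v) + b\<bar> * k (0 + -1 * v)) * indicator {..-b} (0 + -1 * v) \<partial>lborel)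
      = (\<integral>\<^sup>+v. ennreal ((v + -b) * k v) * indicator {- (-b)..} v \<partial>lborel)"
    by (auto intro!: nn_integral_cong split: split_indicator simp: kneg abs_if)
  have e4: "(\<integral>\<^sup>+v. ennreal ((v + -b) * k v) * indicator {- (-b)..} v \<partial>lborel) = ennreal ((-b)/2 + (s + (-b) * arctan ((-b)/s)) / pi)"
    unfolding k_def by (rule HALF[OF s])
  have e5: "ennreal (b/2 + (s + b * arctan (b/s)) / pi) + ennreal ((-b)/2 + (s + (-b) * arctan ((-b)/s)) / pi)
     = ennreal (2/pi * (s + b * arctan (b/s)))"
  proof -
    have at0: "arctan (b/s) \<ge> 0" using b s by simp
    have R: "b/2 + (s + b * arctan (b/s)) / pi \<ge> 0" using b s at0 by (simp add: add_nonneg_nonneg)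
    have key: "b * (pi/2) \<le> s + b * arctan (b/s)"
    proof (cases "b = 0")
      case True then show ?thesis using s by simp
    next
      case False
      then have bp: "b > 0" using b by simp
      have "arctan (1/(b/s)) = pi/2 - arctan (b/s)"
        using arctan_inverse[of "b/s"] bp s by simp
      moreover have "arctan (1/(b/s)) \<le> 1/(b/s)" using bp s by (intro arctan_le_self) simp
      ultimately have "pi/2 - arctan (b/s) \<le> s/b" by simp
      then have "b * (pi/2 - arctan (b/s)) \<le> b * (s/b)" using bp by (intro mult_left_mono) auto
      then show ?thesis using bp by (simp add: algebra_simps)
    qed
    have am: "arctan ((-b)/s) = - arctan (b/s)" by (simp add: arctan_minus)
    have L: "(-b)/2 + (s + (-b) * arctan ((-b)/s)) / pi \<ge> 0"
    proof -
      have "(-b)/2 + (s + (-b) * arctan ((-b)/s)) / pi = (s + b * arctan (b/s) - b * (pi/2)) / pi"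
        unfolding am by (simp add: field_simps)
      also have "\<dots> \<ge> 0" using key by simp
      finally show ?thesis .
    qed
    have "ennreal (b/2 + (s + b * arctan (b/s)) / pi) + ennreal ((-b)/2 + (s + (-b) * arctan ((-b)/s)) / pi)
       = ennreal (b/2 + (s + b * arctan (b/s)) / pi + ((-b)/2 + (s + (-b) * arctan ((-b)/s)) / pi))"
      by (rule ennreal_plus[symmetric, OF R L])
    also have "b/2 + (s + b * arctan (b/s)) / pi + ((-b)/2 + (s + (-b) * arctan ((-b)/s)) / pi)
       = 2/pi * (s + b * arctan (b/s))"
      unfolding am by (simp add: field_simps)
    finally show ?thesis .
  qed
  have eB: "(\<integral>\<^sup>+u. ennreal (\<bar>u + b\<bar> * k u) * indicator {..-b} u \<partial>lborel) = ennreal ((-b)/2 + (s + (-b) * arctan ((-b)/s)) / pi)"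
    by (rule trans[OF e2 trans[OF e3 e4]])
  have eS: "(\<integral>\<^sup>+u. ennreal ((u + b) * k u) * indicator {-b..} u \<partial>lborel)
       + (\<integral>\<^sup>+u. ennreal (\<bar>u + b\<bar> * k u) * indicator {..-b} u \<partial>lborel)
     = ennreal (b/2 + (s + b * arctan (b/s)) / pi) + ennreal ((-b)/2 + (s + (-b) * arctan ((-b)/s)) / pi)"
    by (rule arg_cong2[where f="(+)", OF e1 eB])
  have X: "(\<integral>\<^sup>+u. ennreal (\<bar>u + b\<bar> * k u) \<partial>lborel) = ennreal (2/pi * (s + b * arctan (b/s)))"
    by (rule trans[OF e0 trans[OF eS e5]])
  from X[unfolded k_def] show ?thesis .
qed



lemma dens:
  fixes s x u :: real assumes s: "s > 0"
  shows "std_normal_density x * normal_density 0 s (x*u) = 1/ (2 * pi * s) * exp (- ((s\<^sup>2+u\<^sup>2)/s\<^sup>2) * x\<^sup>2 / 2)"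
proof -
  have sq: "sqrt (2*pi) * sqrt (2 * pi * s\<^sup>2) = 2 * pi * s"
  proof -
    have "sqrt (2*pi) * sqrt (2 * pi * s\<^sup>2) = sqrt ((2 * pi * s)\<^sup>2)"
      by (simp add: real_sqrt_mult[symmetric] power_mult_distrib power2_eq_square mult_ac)
    also have "\<dots> = 2 * pi * s" using s by simp
    finally show ?thesis .
  qed
  have ex: "exp (- x\<^sup>2 / 2) * exp (- (x*u - 0)\<^sup>2 / (2 * s\<^sup>2)) = exp (- ((s\<^sup>2+u\<^sup>2)/s\<^sup>2) * x\<^sup>2 / 2)"
  proof -
    have "- x\<^sup>2 / 2 + - (x*u - 0)\<^sup>2 / (2 * s\<^sup>2) = - ((s\<^sup>2+u\<^sup>2)/s\<^sup>2) * x\<^sup>2 / 2"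
      using s by (simp add: field_simps power_mult_distrib)
    then show ?thesis by (simp add: exp_add[symmetric])
  qed
  have "std_normal_density x * normal_density 0 s (x*u)
     = (1 / (sqrt (2*pi) * sqrt (2 * pi * s\<^sup>2))) * (exp (- x\<^sup>2 / 2) * exp (- (x*u - 0)\<^sup>2 / (2 * s\<^sup>2)))"
    unfolding std_normal_density_def normal_density_def by simp
  also have "\<dots> = 1/ (2 * pi * s) * exp (- ((s\<^sup>2+u\<^sup>2)/s\<^sup>2) * x\<^sup>2 / 2)"
    unfolding sq ex ..
  finally show ?thesis .
qed

lemma inner_x:
  fixes s u b :: real assumes s: "s > 0"
  shows "(\<integral>\<^sup>+x. ennreal (\<bar>x\<bar>^3 * std_normal_density x * normal_density 0 s (x*u) * \<bar>u + b\<bar>) \<partial>lborel)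
    = ennreal (\<bar>u + b\<bar> * (2 * s^3 / (pi * (s\<^sup>2 + u\<^sup>2)\<^sup>2)))"
proof -
  define c where "c = (s\<^sup>2+u\<^sup>2)/s\<^sup>2"
  have c: "c > 0" using s by (simp add: c_def add_pos_nonneg)
  have "(\<integral>\<^sup>+x. ennreal (\<bar>x\<bar>^3 * std_normal_density x * normal_density 0 s (x*u) * \<bar>u + b\<bar>) \<partial>lborel)
     = (\<integral>\<^sup>+x. ennreal (\<bar>u + b\<bar>/ (2 * pi * s)) * ennreal (\<bar>x\<bar>^3 * exp (- c * x\<^sup>2 / 2)) \<partial>lborel)"
  proof (rule nn_integral_cong)
    fix x :: real
    have "\<bar>x\<bar>^3 * std_normal_density x * normal_density 0 s (x*u) * \<bar>u + b\<bar>
        = \<bar>x\<bar>^3 * (std_normal_density x * normal_density 0 s (x*u)) * \<bar>u + b\<bar>" by (simp only: mult_ac)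
    also have "\<dots> = (\<bar>u + b\<bar>/ (2 * pi * s)) * (\<bar>x\<bar>^3 * exp (- c * x\<^sup>2 / 2))"
      unfolding dens[OF s] c_def by (simp add: field_simps)
    finally have E: "\<bar>x\<bar>^3 * std_normal_density x * normal_density 0 s (x*u) * \<bar>u + b\<bar> = (\<bar>u + b\<bar>/ (2 * pi * s)) * (\<bar>x\<bar>^3 * exp (- c * x\<^sup>2 / 2))" .
    show "ennreal (\<bar>x\<bar>^3 * std_normal_density x * normal_density 0 s (x*u) * \<bar>u + b\<bar>)
       = ennreal (\<bar>u + b\<bar>/ (2 * pi * s)) * ennreal (\<bar>x\<bar>^3 * exp (- c * x\<^sup>2 / 2))"
      unfolding E by (rule ennreal_mult') (use s in simp)
  qed
  also have "\<dots> = ennreal (\<bar>u + b\<bar>/ (2 * pi * s)) * ennreal (4 / c\<^sup>2)"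
  proof -
    have "(\<integral>\<^sup>+x. ennreal (\<bar>u + b\<bar>/ (2 * pi * s)) * ennreal (\<bar>x\<bar>^3 * exp (- c * x\<^sup>2 / 2)) \<partial>lborel)
       = ennreal (\<bar>u + b\<bar>/ (2 * pi * s)) * (\<integral>\<^sup>+x. ennreal (\<bar>x\<bar>^3 * exp (- c * x\<^sup>2 / 2)) \<partial>lborel)"
      by (rule nn_integral_cmult) measurable
    then show ?thesis unfolding L1[OF c] .
  qed
  also have "\<dots> = ennreal (\<bar>u + b\<bar>/ (2 * pi * s) * (4 / c\<^sup>2))"
    by (rule ennreal_mult'[symmetric]) (use s in simp)
  also have "\<bar>u + b\<bar>/ (2 * pi * s) * (4 / c\<^sup>2) = \<bar>u + b\<bar> * (2 * s^3 / (pi * (s\<^sup>2 + u\<^sup>2)\<^sup>2))"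
  proof -
    have p: "s\<^sup>2 + u\<^sup>2 > 0" using s by (simp add: add_pos_nonneg)
    show ?thesis unfolding c_def using s p by (simp add: field_simps power2_eq_square power3_eq_cube)
  qed
  finally show ?thesis .
qed



lemma subst_y:
  fixes x b s :: real assumes s: "s > 0"
  shows "(\<integral>\<^sup>+y. ennreal (std_normal_density x * normal_density 0 s y * \<bar>x * (y + x * b)\<bar>) \<partial>lborel)
    = (\<integral>\<^sup>+u. ennreal (\<bar>x\<bar>^3 * std_normal_density x * normal_density 0 s (x*u) * \<bar>u + b\<bar>) \<partial>lborel)"
proof (cases "x = 0")
  case True then show ?thesis by simp
next
  case False
  have "(\<integral>\<^sup>+y. ennreal (std_normal_density x * normal_density 0 s y * \<bar>x * (y + x * b)\<bar>) \<partial>lborel)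
     = ennreal \<bar>x\<bar> * (\<integral>\<^sup>+u. ennreal (std_normal_density x * normal_density 0 s (0 + x * u) * \<bar>x * ((0 + x * u) + x * b)\<bar>) \<partial>lborel)"
  proof (rule nn_integral_real_affine[where f="\<lambda>y. ennreal (std_normal_density x * normal_density 0 s y * \<bar>x * (y + x * b)\<bar>)" and c=x and t=0])
    show "(\<lambda>y. ennreal (std_normal_density x * normal_density 0 s y * \<bar>x * (y + x * b)\<bar>)) \<in> borel_measurable borel"
      unfolding normal_density_def by measurable
  qed (rule False)
  also have "\<dots> = (\<integral>\<^sup>+u. ennreal \<bar>x\<bar> * ennreal (std_normal_density x * normal_density 0 s (0 + x * u) * \<bar>x * ((0 + x * u) + x * b)\<bar>) \<partial>lborel)"
    by (rule nn_integral_cmult[symmetric]) (unfold normal_density_def, measurable)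
  also have "\<dots> = (\<integral>\<^sup>+u. ennreal (\<bar>x\<bar>^3 * std_normal_density x * normal_density 0 s (x*u) * \<bar>u + b\<bar>) \<partial>lborel)"
  proof (rule nn_integral_cong)
    fix u :: real
    have "\<bar>x\<bar> * (std_normal_density x * normal_density 0 s (0 + x * u) * \<bar>x * ((0 + x * u) + x * b)\<bar>)
       = \<bar>x\<bar>^3 * std_normal_density x * normal_density 0 s (x*u) * \<bar>u + b\<bar>"
    proof -
      have "\<bar>x * ((0 + x * u) + x * b)\<bar> = \<bar>x\<bar> * \<bar>x\<bar> * \<bar>u + b\<bar>"
        by (simp add: abs_mult distrib_left[symmetric])
      then show ?thesis by (simp add: power3_eq_cube mult_ac)
    qed
    then show "ennreal \<bar>x\<bar> * ennreal (std_normal_density x * normal_density 0 s (0 + x * u) * \<bar>x * ((0 + x * u) + x * b)\<bar>)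
       = ennreal (\<bar>x\<bar>^3 * std_normal_density x * normal_density 0 s (x*u) * \<bar>u + b\<bar>)"
      by (simp add: ennreal_mult'[symmetric])
  qed
  finally show ?thesis .
qed

lemma L3:
  fixes s b :: real assumes s: "s > 0" and b: "b \<ge> 0"
  shows "(\<integral>\<^sup>+z. ennreal \<bar>fst z * (snd z + fst z * b)\<bar> \<partial>em_joint s) = ennreal (2/pi * (s + b * arctan (b/s)))"
proof -
  interpret D2: prob_space "density lborel (normal_density 0 s)" by (rule prob_space_normal_density[OF s])
  have pd: "em_joint s = density (lborel \<Otimes>\<^sub>M lborel) (\<lambda>(x,y). ennreal (std_normal_density x) * ennreal (normal_density 0 s y))"
    unfolding em_joint_def
  proof (rule pair_measure_density)
    show "sigma_finite_measure (density lborel (normal_density 0 s))" by unfold_locales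
  qed (auto simp: normal_density_def intro!: lborel.sigma_finite_measure_axioms)
  have "(\<integral>\<^sup>+z. ennreal \<bar>fst z * (snd z + fst z * b)\<bar> \<partial>em_joint s)
     = (\<integral>\<^sup>+z. (\<lambda>(x,y). ennreal (std_normal_density x) * ennreal (normal_density 0 s y)) z * ennreal \<bar>fst z * (snd z + fst z * b)\<bar> \<partial>(lborel \<Otimes>\<^sub>M lborel))"
    unfolding pd by (rule nn_integral_density) (unfold normal_density_def, measurable)
  also have "\<dots> = (\<integral>\<^sup>+z. (\<lambda>(x,y). ennreal (std_normal_density x * normal_density 0 s y * \<bar>x * (y + x * b)\<bar>)) z \<partial>(lborel \<Otimes>\<^sub>M lborel))"
  proof (rule nn_integral_cong)
    fix z :: "real \<times> real"
    obtain x y where z: "z = (x,y)" by (cases z)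
    show "(\<lambda>(x,y). ennreal (std_normal_density x) * ennreal (normal_density 0 s y)) z * ennreal \<bar>fst z * (snd z + fst z * b)\<bar>
      = (\<lambda>(x,y). ennreal (std_normal_density x * normal_density 0 s y * \<bar>x * (y + x * b)\<bar>)) z"
      unfolding z by (simp add: ennreal_mult[symmetric])
  qed
  also have "\<dots> = (\<integral>\<^sup>+x. \<integral>\<^sup>+y. ennreal (std_normal_density x * normal_density 0 s y * \<bar>x * (y + x * b)\<bar>) \<partial>lborel \<partial>lborel)"
  proof -
    have m: "(\<lambda>(x,y). ennreal (std_normal_density x * normal_density 0 s y * \<bar>x * (y + x * b)\<bar>)) \<in> borel_measurable (lborel \<Otimes>\<^sub>M lborel)"
      unfolding normal_density_def by measurable
    show ?thesis using sigma_finite_measure.nn_integral_fst[OF lborel.sigma_finite_measure_axioms m] by simp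
  qed
  also have "\<dots> = (\<integral>\<^sup>+x. \<integral>\<^sup>+u. ennreal (\<bar>x\<bar>^3 * std_normal_density x * normal_density 0 s (x*u) * \<bar>u + b\<bar>) \<partial>lborel \<partial>lborel)"
    by (rule nn_integral_cong) (rule subst_y[OF s])
  also have "\<dots> = (\<integral>\<^sup>+u. \<integral>\<^sup>+x. ennreal (\<bar>x\<bar>^3 * std_normal_density x * normal_density 0 s (x*u) * \<bar>u + b\<bar>) \<partial>lborel \<partial>lborel)"
    by (rule lborel_pair.Fubini'[symmetric]) (unfold normal_density_def, measurable)
  also have "\<dots> = (\<integral>\<^sup>+u. ennreal (\<bar>u + b\<bar> * (2 * s^3 / (pi * (s\<^sup>2 + u\<^sup>2)\<^sup>2))) \<partial>lborel)"
    by (rule nn_integral_cong) (rule inner_x[OF s])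
  also have "\<dots> = ennreal (2/pi * (s + b * arctan (b/s)))"
    by (rule L2[OF s b])
  finally show ?thesis .
qed



lemma tanh_mono_t:
  fixes a a' t :: real assumes "0 \<le> a" "a \<le> a'"
  shows "tanh (a * t) * t \<le> tanh (a' * t) * t"
proof (cases "t \<ge> 0")
  case True
  then have "a * t \<le> a' * t" using assms by (intro mult_right_mono) auto
  then show ?thesis using True by (intro mult_right_mono) auto
next
  case False
  then have "a' * t \<le> a * t" using assms by (intro mult_right_mono_neg) auto
  then show ?thesis using False by (intro mult_right_mono_neg) auto
qed

lemma tanh_bound_t:
  fixes a t :: real
  shows "\<bar>tanh (a * t) * t\<bar> \<le> \<bar>t\<bar>"
proof -
  have "\<bar>tanh (a * t)\<bar> \<le> 1" using tanh_real_bounds[of "a*t"] by auto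
  then have "\<bar>tanh (a * t)\<bar> * \<bar>t\<bar> \<le> 1 * \<bar>t\<bar>" by (intro mult_right_mono) auto
  then show ?thesis by (simp add: abs_mult)
qed

lemma tanh_lim_t:
  fixes k t :: real assumes k: "k > 0"
  shows "((\<lambda>a. tanh (a * k * t) * t) \<longlongrightarrow> \<bar>t\<bar>) at_top"
proof -
  consider "t > 0" | "t < 0" | "t = 0" by linarith
  then show ?thesis
  proof cases
    case 1
    have "filterlim (\<lambda>a. (k * t) * a) at_top at_top"
      by (rule filterlim_tendsto_pos_mult_at_top[OF tendsto_const _ filterlim_ident]) (use k 1 in simp)
    then have "((\<lambda>a. tanh ((k * t) * a)) \<longlongrightarrow> 1) at_top"
      by (rule filterlim_compose[OF tanh_real_at_top])
    then have "((\<lambda>a. tanh ((k * t) * a) * t) \<longlongrightarrow> 1 * t) at_top"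
      by (intro tendsto_mult tendsto_const)
    then show ?thesis using 1 by (simp add: mult_ac)
  next
    case 2
    have "filterlim (\<lambda>a. (k * t) * a) at_bot at_top"
      by (rule filterlim_tendsto_neg_mult_at_bot[OF tendsto_const _ filterlim_ident]) (use k 2 in \<open>simp add: mult_pos_neg\<close>)
    then have "((\<lambda>a. tanh ((k * t) * a)) \<longlongrightarrow> -1) at_top"
      by (rule filterlim_compose[OF tanh_real_at_bot])
    then have "((\<lambda>a. tanh ((k * t) * a) * t) \<longlongrightarrow> -1 * t) at_top"
      by (intro tendsto_mult tendsto_const)
    then show ?thesis using 2 by (simp add: mult_ac)
  next
    case 3
    then show ?thesis by simp
  qed
qed

lemma tanh_meas [measurable]: "(tanh :: real \<Rightarrow> real) \<in> borel_measurable borel"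
proof (rule borel_measurable_continuous_onI)
  show "continuous_on UNIV (tanh :: real \<Rightarrow> real)"
    by (intro continuous_on_tanh continuous_on_id) simp
qed

lemma em_meas:
  assumes "f \<in> borel_measurable (borel \<Otimes>\<^sub>M borel)"
  shows "f \<in> borel_measurable (em_joint s)"
proof -
  have "sets (em_joint s) = sets (borel \<Otimes>\<^sub>M borel)"
    unfolding em_joint_def by (intro sets_pair_measure_cong) auto
  then have eq: "borel_measurable (em_joint s) = borel_measurable (borel \<Otimes>\<^sub>M borel)"
    by (rule measurable_cong_sets) (rule refl)
  from assms show ?thesis unfolding eq .
qed

theorem lemma11:
  fixes \<sigma> b1s b2s :: real
  assumes "b1s \<ge> 0" and "b2s \<ge> 0" and "\<sigma> > 0"
  defines "\<sigma>2 \<equiv> sqrt (\<sigma>\<^sup>2 + b2s\<^sup>2)"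
  shows "mono_on {0<..} (em_b1' \<sigma> b1s b2s) \<and>
     (em_b1' \<sigma> b1s b2s \<longlongrightarrow> 2 / pi * (b1s * arctan (b1s / \<sigma>2) + \<sigma>2)) at_top"
proof -
  have s: "\<sigma>2 > 0" unfolding \<sigma>2_def using assms(3) by (simp add: add_pos_nonneg)
  have sig2: "\<sigma>\<^sup>2 > 0" using assms(3) by simp
  define M where "M = em_joint \<sigma>2"
  define g where "g a = (\<lambda>(\<alpha>::real, y::real). tanh (a * \<alpha> / \<sigma>\<^sup>2 * (y + \<alpha> * b1s)) * (y + \<alpha> * b1s) * \<alpha>)" for a
  define w where "w = (\<lambda>z::real\<times>real. \<bar>fst z * (snd z + fst z * b1s)\<bar>)"
  have b1: "em_b1' \<sigma> b1s b2s a = integral\<^sup>L M (g a)" for a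
    unfolding em_b1'_def M_def g_def \<sigma>2_def ..
  have g_alt: "g a z = tanh ((a / \<sigma>\<^sup>2) * (fst z * (snd z + fst z * b1s))) * (fst z * (snd z + fst z * b1s))" for a z
  proof -
    obtain x y where z: "z = (x, y)" by (cases z)
    show ?thesis unfolding z g_def by (simp add: mult_ac)
  qed
  have wm: "w \<in> borel_measurable M" unfolding M_def w_def by (rule em_meas) measurable
  have gm: "g a \<in> borel_measurable M" for a unfolding M_def g_def by (rule em_meas) measurable
  have nnw: "(\<integral>\<^sup>+z. ennreal (w z) \<partial>M) = ennreal (2/pi * (\<sigma>2 + b1s * arctan (b1s/\<sigma>2)))"
    unfolding M_def w_def by (rule L3[OF s assms(1)])
  have intw: "integrable M w"
    by (rule integrableI_nonneg[OF wm]) (simp add: w_def, simp add: nnw)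
  have intw_val: "integral\<^sup>L M w = 2/pi * (\<sigma>2 + b1s * arctan (b1s/\<sigma>2))"
  proof -
    have "ennreal (integral\<^sup>L M w) = ennreal (2/pi * (\<sigma>2 + b1s * arctan (b1s/\<sigma>2)))"
      using nn_integral_eq_integral[OF intw] nnw by (simp add: w_def)
    moreover have "integral\<^sup>L M w \<ge> 0" by (rule Bochner_Integration.integral_nonneg) (simp add: w_def)
    moreover have "2/pi * (\<sigma>2 + b1s * arctan (b1s/\<sigma>2)) \<ge> 0" using s assms(1) by simp
    ultimately show ?thesis by simp
  qed
  have bound: "norm (g a z) \<le> w z" for a z
    unfolding g_alt w_def real_norm_def by (rule tanh_bound_t)
  have intg: "integrable M (g a)" for a
  proof (rule Bochner_Integration.integrable_bound[OF intw gm])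
    have "norm (g a z) \<le> norm (w z)" for z using bound[of a z] by (simp add: w_def)
    then show "AE z in M. norm (g a z) \<le> norm (w z)" by simp
  qed
  have mono: "mono_on {0<..} (em_b1' \<sigma> b1s b2s)"
  proof (rule mono_onI)
    fix a a' :: real assume "a \<in> {0<..}" "a' \<in> {0<..}" "a \<le> a'"
    then have "0 \<le> a / \<sigma>\<^sup>2" "a / \<sigma>\<^sup>2 \<le> a' / \<sigma>\<^sup>2" using sig2 by (auto intro: divide_right_mono)
    then have "g a z \<le> g a' z" for z unfolding g_alt by (rule tanh_mono_t)
    then show "em_b1' \<sigma> b1s b2s a \<le> em_b1' \<sigma> b1s b2s a'"
      unfolding b1 by (intro integral_mono intg)
  qed
  have lim: "((\<lambda>a. integral\<^sup>L M (g a)) \<longlongrightarrow> integral\<^sup>L M w) at_top"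
  proof (rule integral_dominated_convergence_at_top[OF wm gm intw])
    show "AE z in M. ((\<lambda>a. g a z) \<longlongrightarrow> w z) at_top"
    proof (rule AE_I2)
      fix z
      have "((\<lambda>a. tanh (a * (1 / \<sigma>\<^sup>2) * (fst z * (snd z + fst z * b1s))) * (fst z * (snd z + fst z * b1s))) \<longlongrightarrow> w z) at_top"
        unfolding w_def by (rule tanh_lim_t) (use sig2 in simp)
      then show "((\<lambda>a. g a z) \<longlongrightarrow> w z) at_top" unfolding g_alt by simp
    qed
    show "\<forall>\<^sub>F a in at_top. AE z in M. norm (g a z) \<le> w z"
      using bound by simp
  qed
  have "(em_b1' \<sigma> b1s b2s \<longlongrightarrow> 2 / pi * (b1s * arctan (b1s / \<sigma>2) + \<sigma>2)) at_top"
    using lim unfolding b1[abs_def] intw_val by (simp add: add.commute)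
  with mono show ?thesis by blast
qed


end
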